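(* For every temporal graph with static graph $G=(V,E)$ and lifetime $T_{\max}$ and every $\delta$, there is a strategy for the Discoverer that wins the ideal patient zero game in $T_{\max}|V|$ rounds.
   Context: A temporal graph $\mathcal G=(V,E,\lambda)$ with lifetime $T_{\max}$ consists of a finite undirected static graph $(V,E)$ and a labeling $\lambda:E\to\{1,\dots,T_{\max}\}$; edge $e$ is present only at time $\lambda(e)$. Infection model with parameter $\delta\in\mathbb N^+$: a seed $(u,t)$ makes $u$ infected at time $t$; otherwise a susceptible node $u$ becomes infected at time $t$ iff some neighbour $v$ infectious at time $t$ has $\lambda(uv)=t$ (exactly one infector recorded if several exist). A node infected at time $t$ is infectious at times $t+1,\dots,t+\delta$ and resistant afterwards. In each round the Discoverer (who knows $V$ and $E$) submits seed infections and the Adversary returns a consistent infection log (triples $(u,v,t)$: $u$ infected $v$ at time $t$) under some labeling consistent with all previous answers. A node $v$ is an ideal patient zero with time $t$ (and $(v,t)$ an IPZ pair) if seed-infecting only $(v,t)$ causes every node to become infected. In the IPZ game the Discoverer finally submits a pair $(u,t)$ or $\bot$; it loses if the pair is not an IPZ pair or if it submits $\bot$ while an IPZ pair exists, for some labeling consistent with all logs; otherwise it wins. *)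

theory Defs
  imports Main
begin

text \<open>A labeling lam assigns to each
edge a time in {1..Tmax}; values of lam outside E are irrelevant.\<close>

definition static_graph :: "'v set \<Rightarrow> 'v set set \<Rightarrow> bool" where
  "static_graph V E \<longleftrightarrow> finite V \<and> (\<forall>e\<in>E. e \<subseteq> V \<and> card e = 2)"

definition valid_labeling :: "'v set set \<Rightarrow> nat \<Rightarrow> ('v set \<Rightarrow> nat) \<Rightarrow> bool" where
  "valid_labeling E Tmax lam \<longleftrightarrow> (\<forall>e\<in>E. lam e \<in> {1..Tmax})"

text \<open>itimes V E lam delta S n u = Some t iff u became infected at time t \<le> n
when the seed infections S are submitted (seeds only infect susceptible nodes).\<close>

primrec itimes :: "'v set \<Rightarrow> 'v set set \<Rightarrow> ('v set \<Rightarrow> nat) \<Rightarrow> nat \<Rightarrow> ('v \<times> nat) set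
    \<Rightarrow> nat \<Rightarrow> 'v \<Rightarrow> nat option" where
  "itimes V E lam delta S 0 =
     (\<lambda>u. if u \<in> V \<and> (u, 0) \<in> S then Some 0 else None)"
| "itimes V E lam delta S (Suc n) =
     (let f = itimes V E lam delta S n in
      (\<lambda>u. if f u \<noteq> None then f u
           else if u \<in> V \<and> ((u, Suc n) \<in> S \<or>
                  (\<exists>w s. f w = Some s \<and> s < Suc n \<and> Suc n \<le> s + delta
                         \<and> {u, w} \<in> E \<and> lam {u, w} = Suc n))
           then Some (Suc n) else None))"

definition infected_at :: "'v set \<Rightarrow> 'v set set \<Rightarrow> ('v set \<Rightarrow> nat) \<Rightarrow> nat \<Rightarrow> ('v \<times> nat) set
    \<Rightarrow> 'v \<Rightarrow> nat \<Rightarrow> bool" where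
  "infected_at V E lam delta S u t \<longleftrightarrow> (\<exists>n. itimes V E lam delta S n u = Some t)"

text \<open>A valid infection log for seeds S under labeling lam: a set of triples
(w,u,t) meaning w infected u at time t; every non-seed infection is recorded
with exactly one (arbitrary) infector that was infectious at that time and
adjacent via an edge labelled t. Seed infections are not recorded.\<close>

definition is_log :: "'v set \<Rightarrow> 'v set set \<Rightarrow> ('v set \<Rightarrow> nat) \<Rightarrow> nat \<Rightarrow> ('v \<times> nat) set
    \<Rightarrow> ('v \<times> 'v \<times> nat) set \<Rightarrow> bool" where
  "is_log V E lam delta S L \<longleftrightarrow>
     (\<forall>(w, u, t) \<in> L. infected_at V E lam delta S u t \<and> (u, t) \<notin> S \<and>
         {w, u} \<in> E \<and> lam {w, u} = t \<and>
         (\<exists>s. infected_at V E lam delta S w s \<and> s < t \<and> t \<le> s + delta)) \<and>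
     (\<forall>u t. infected_at V E lam delta S u t \<and> (u, t) \<notin> S \<longrightarrow> (\<exists>!w. (w, u, t) \<in> L))"

definition IPZ :: "'v set \<Rightarrow> 'v set set \<Rightarrow> ('v set \<Rightarrow> nat) \<Rightarrow> nat \<Rightarrow> 'v \<Rightarrow> nat \<Rightarrow> bool" where
  "IPZ V E lam delta v t \<longleftrightarrow>
     v \<in> V \<and> (\<forall>u\<in>V. \<exists>s. infected_at V E lam delta {(v, t)} u s)"

datatype 'v move = Query "('v \<times> nat) set" | Guess "('v \<times> nat) option"

type_synonym 'v history = "(('v \<times> nat) set \<times> ('v \<times> 'v \<times> nat) set) list"

type_synonym 'v strategy = "'v history \<Rightarrow> 'v move"

definition consistent :: "'v set \<Rightarrow> 'v set set \<Rightarrow> nat \<Rightarrow> nat \<Rightarrow> ('v set \<Rightarrow> nat)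
    \<Rightarrow> 'v history \<Rightarrow> bool" where
  "consistent V E Tmax delta lam h \<longleftrightarrow> valid_labeling E Tmax lam \<and>
     (\<forall>(S, L) \<in> set h. is_log V E lam delta S L)"

definition generated :: "'v strategy \<Rightarrow> 'v history \<Rightarrow> bool" where
  "generated strat h \<longleftrightarrow> (\<forall>i < length h. strat (take i h) = Query (fst (h ! i)))"

fun correct_guess :: "'v set \<Rightarrow> 'v set set \<Rightarrow> ('v set \<Rightarrow> nat) \<Rightarrow> nat
    \<Rightarrow> ('v \<times> nat) option \<Rightarrow> bool" where
  "correct_guess V E lam delta None = (\<not> (\<exists>v t. IPZ V E lam delta v t))"
| "correct_guess V E lam delta (Some (v, t)) = IPZ V E lam delta v t"

text \<open>The strategy wins within k rounds: along every play against an Adversary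
whose answers are consistent with some labeling, the Discoverer submits only finite
seed sets, submits at most k of them, and its final answer is correct for every
labeling consistent with all logs.\<close>

definition wins_within :: "'v set \<Rightarrow> 'v set set \<Rightarrow> nat \<Rightarrow> nat \<Rightarrow> 'v strategy \<Rightarrow> nat \<Rightarrow> bool" where
  "wins_within V E Tmax delta strat k \<longleftrightarrow>
     (\<forall>h. generated strat h \<and> (\<exists>lam. consistent V E Tmax delta lam h) \<longrightarrow>
        (case strat h of
           Query S \<Rightarrow> finite S \<and> length h < k
         | Guess a \<Rightarrow> (\<forall>lam. consistent V E Tmax delta lam h \<longrightarrow> correct_guess V E lam delta a)))"

end

theory Submission
  imports Defs
begin

definition covers :: "'v set \<Rightarrow> ('v \<times> nat) \<Rightarrow> ('v \<times> 'v \<times> nat) set \<Rightarrow> bool" where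
  "covers V p L \<longleftrightarrow> fst p \<in> V \<and> (\<forall>u\<in>V. u = fst p \<or> (\<exists>w s. (w, u, s) \<in> L))"

definition qlist :: "'v set \<Rightarrow> nat \<Rightarrow> ('v \<times> nat) list" where
  "qlist V Tmax = List.product (SOME xs. set xs = V \<and> distinct xs) [0..<Tmax]"

definition ipz_strat :: "'v set \<Rightarrow> nat \<Rightarrow> 'v strategy" where
  "ipz_strat V Tmax h =
    (if length h < length (qlist V Tmax) then Query {qlist V Tmax ! length h}
     else if \<exists>i<length (qlist V Tmax). covers V (qlist V Tmax ! i) (snd (h ! i))
       then Guess (Some (qlist V Tmax ! (SOME i. i < length (qlist V Tmax) \<and>
                covers V (qlist V Tmax ! i) (snd (h ! i)))))
     else if card V = 1 then Guess (Some (the_elem V, Tmax)) else Guess None)"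

lemma qlist_props:
  assumes "finite V"
  shows "set (qlist V Tmax) = V \<times> {0..<Tmax}" "length (qlist V Tmax) = Tmax * card V"
proof -
  obtain xs where "set xs = V \<and> distinct xs" using finite_distinct_list[OF assms] by blast
  then have x: "set (SOME xs. set xs = V \<and> distinct xs) = V \<and> distinct (SOME xs. set xs = V \<and> distinct xs)"
    by (rule someI)
  then show "set (qlist V Tmax) = V \<times> {0..<Tmax}" by (simp add: qlist_def)
  show "length (qlist V Tmax) = Tmax * card V" using x
    by (simp add: qlist_def distinct_card[symmetric])
qed

lemma seed_infected:
  assumes "u \<in> V" "(u, n) \<in> S"
  shows "itimes V E lam delta S n u \<noteq> None"
  using assms by (cases n) (auto simp: Let_def)

lemma itimes_mono:
  "itimes V E lam delta S n u = Some s \<Longrightarrow> itimes V E lam delta S (Suc n) u = Some s"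
  by (simp add: Let_def)

lemma ipz_iff_covers:
  assumes "is_log V E lam delta {(v, t)} L"
  shows "IPZ V E lam delta v t \<longleftrightarrow> covers V (v, t) L"
proof
  assume a: "IPZ V E lam delta v t"
  show "covers V (v, t) L" unfolding covers_def fst_conv
  proof (intro conjI ballI)
    show "v \<in> V" using a by (simp add: IPZ_def)
    fix u assume "u \<in> V"
    then obtain s where s: "infected_at V E lam delta {(v, t)} u s" using a by (auto simp: IPZ_def)
    show "u = v \<or> (\<exists>w s. (w, u, s) \<in> L)"
    proof (cases "(u, s) \<in> {(v, t)}")
      case True then show ?thesis by simp
    next
      case False
      have "\<forall>u r. infected_at V E lam delta {(v, t)} u r \<and> (u, r) \<notin> {(v, t)} \<longrightarrow> (\<exists>!w. (w, u, r) \<in> L)"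
        using assms unfolding is_log_def by (elim conjE) assumption
      then have "\<exists>!w. (w, u, s) \<in> L" using s False by blast
      then show ?thesis by blast
    qed
  qed
next
  assume c: "covers V (v, t) L"
  show "IPZ V E lam delta v t" unfolding IPZ_def
  proof (intro conjI ballI)
    show "v \<in> V" using c by (simp add: covers_def)
    fix u assume u: "u \<in> V"
    show "\<exists>s. infected_at V E lam delta {(v, t)} u s"
    proof (cases "u = v")
      case True
      then have "itimes V E lam delta {(v, t)} t u \<noteq> None" using seed_infected[of u V t "{(v,t)}"] u by simp
      then show ?thesis unfolding infected_at_def by blast
    next
      case False
      then obtain w s where "(w, u, s) \<in> L" using c u by (auto simp: covers_def)
      moreover have "\<forall>(w, u, r) \<in> L. infected_at V E lam delta {(v, t)} u r"
        using assms unfolding is_log_def by fast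
      ultimately show ?thesis by fast
    qed
  qed
qed

lemma late_seed_inv:
  assumes "static_graph V E" "valid_labeling E Tmax lam" "Tmax \<le> t"
  shows "itimes V E lam delta {(v, t)} n u \<noteq> None \<Longrightarrow> u = v \<and> itimes V E lam delta {(v, t)} n u = Some t"
proof (induction n arbitrary: u)
  case 0
  then show ?case by (auto split: if_splits)
next
  case (Suc n)
  let ?f = "itimes V E lam delta {(v, t)} n"
  show ?case
  proof (cases "?f u = None")
    case False
    then have "u = v \<and> ?f u = Some t" using Suc.IH[of u] by blast
    then show ?thesis using itimes_mono[of V E lam delta "{(v,t)}" n u t] by blast
  next
    case True
    have noinf: "\<not> (\<exists>w s. ?f w = Some s \<and> s < Suc n \<and> Suc n \<le> s + delta
                         \<and> {u, w} \<in> E \<and> lam {u, w} = Suc n)"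
    proof
      assume "\<exists>w s. ?f w = Some s \<and> s < Suc n \<and> Suc n \<le> s + delta \<and> {u, w} \<in> E \<and> lam {u, w} = Suc n"
      then obtain w s where w: "?f w = Some s" "s < Suc n" "{u, w} \<in> E" "lam {u, w} = Suc n" by blast
      from Suc.IH[of w] w(1) have "w = v" "s = t" by auto
      show False
      proof (cases "u = w")
        case True
        then have "card {u, w} = 1" by simp
        then show False using w(3) assms(1) unfolding static_graph_def by fastforce
      next
        case False
        have "lam {u, w} \<le> Tmax" using w(3) assms(2) unfolding valid_labeling_def by auto
        then show False using w(2,4) \<open>s = t\<close> assms(3) by simp
      qed
    qed
    show ?thesis using Suc.prems True noinf by (auto simp: Let_def split: if_splits)
  qed
qed

lemma late_ipz:
  assumes "static_graph V E" "valid_labeling E Tmax lam" "Tmax \<le> t" "IPZ V E lam delta v t"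
  shows "V = {v}"
proof -
  have "\<forall>u\<in>V. u = v"
  proof
    fix u assume "u \<in> V"
    then obtain s n where "itimes V E lam delta {(v, t)} n u = Some s"
      using assms(4) unfolding IPZ_def infected_at_def by blast
    then show "u = v" using late_seed_inv[OF assms(1-3)] by blast
  qed
  then show ?thesis using assms(4) unfolding IPZ_def by blast
qed

lemma generated_props:
  assumes "generated (ipz_strat V Tmax) h"
  shows "length h \<le> length (qlist V Tmax)" "\<And>i. i < length h \<Longrightarrow> fst (h ! i) = {qlist V Tmax ! i}"
proof -
  show "length h \<le> length (qlist V Tmax)"
  proof (rule ccontr)
    assume nl: "\<not> ?thesis"
    then have "ipz_strat V Tmax (take (length (qlist V Tmax)) h) = Query (fst (h ! length (qlist V Tmax)))"
      using assms unfolding generated_def by auto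
    moreover have "length (take (length (qlist V Tmax)) h) = length (qlist V Tmax)"
      using nl by simp
    ultimately show False unfolding ipz_strat_def by (auto split: if_splits)
  qed
  fix i assume "i < length h"
  then have "ipz_strat V Tmax (take i h) = Query (fst (h ! i))" "length (take i h) = i"
    using assms unfolding generated_def by auto
  then show "fst (h ! i) = {qlist V Tmax ! i}" unfolding ipz_strat_def by (auto split: if_splits)
qed

theorem mainTheorem10:
  fixes V :: "'v set" and E :: "'v set set" and Tmax delta :: nat
  assumes "static_graph V E" and "delta \<ge> 1"
  shows "\<exists>strat. wins_within V E Tmax delta strat (Tmax * card V)"
proof (intro exI)
  have fin: "finite V" using assms(1) by (simp add: static_graph_def)
  let ?q = "qlist V Tmax"
  have qset: "set ?q = V \<times> {0..<Tmax}" and qlen: "length ?q = Tmax * card V"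
    using qlist_props[OF fin] by auto
  show "wins_within V E Tmax delta (ipz_strat V Tmax) (Tmax * card V)"
    unfolding wins_within_def
  proof (intro allI impI)
    fix h assume a: "generated (ipz_strat V Tmax) h \<and> (\<exists>lam. consistent V E Tmax delta lam h)"
    have hl: "length h \<le> length ?q" and hf: "\<And>i. i < length h \<Longrightarrow> fst (h ! i) = {?q ! i}"
      using generated_props a by blast+
    have logs: "is_log V E lam delta {?q ! i} (snd (h ! i))"
      if "consistent V E Tmax delta lam h" "i < length h" for lam i
    proof -
      have mem: "h ! i \<in> set h" using that(2) by simp
      have all: "\<forall>(S, L)\<in>set h. is_log V E lam delta S L"
        using that(1) by (simp add: consistent_def)
      obtain S L where hi: "h ! i = (S, L)" by fastforce
      have "case (S, L) of (S, L) \<Rightarrow> is_log V E lam delta S L"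
        using bspec[OF all mem] unfolding hi .
      then have "is_log V E lam delta (fst (h ! i)) (snd (h ! i))"
        using hi by simp
      then show ?thesis using hf[OF that(2)] by simp
    qed
    show "case ipz_strat V Tmax h of
           Query S \<Rightarrow> finite S \<and> length h < Tmax * card V
         | Guess a \<Rightarrow> (\<forall>lam. consistent V E Tmax delta lam h \<longrightarrow> correct_guess V E lam delta a)"
    proof (cases "length h < length ?q")
      case True
      then show ?thesis using qlen by (simp add: ipz_strat_def)
    next
      case False
      then have hq: "length h = length ?q" using hl by simp
      show ?thesis
      proof (cases "\<exists>i<length ?q. covers V (?q ! i) (snd (h ! i))")
        case True
        define j where "j = (SOME i. i < length ?q \<and> covers V (?q ! i) (snd (h ! i)))"
        have j: "j < length ?q \<and> covers V (?q ! j) (snd (h ! j))"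
          unfolding j_def using True by (rule someI_ex)
        have st: "ipz_strat V Tmax h = Guess (Some (?q ! j))"
          using False True unfolding ipz_strat_def j_def by simp
        show ?thesis unfolding st
        proof (simp, intro allI impI)
          fix lam assume c: "consistent V E Tmax delta lam h"
          obtain v t where vt: "?q ! j = (v, t)" by (cases "?q ! j")
          have "j < length h" using j hq by simp
          then have "is_log V E lam delta {?q ! j} (snd (h ! j))" by (rule logs[OF c])
          then have "is_log V E lam delta {(v, t)} (snd (h ! j))" using vt by simp
          then have "IPZ V E lam delta v t" using ipz_iff_covers[of V E lam delta v t "snd (h ! j)"] j vt by simp
          then show "correct_guess V E lam delta (Some (?q ! j))" using vt by simp
        qed
      next
        case nc: False
        show ?thesis
        proof (cases "card V = 1")
          case True
          then obtain x where x: "V = {x}" using card_1_singletonE by blast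
          have st: "ipz_strat V Tmax h = Guess (Some (x, Tmax))"
          proof -
            have "ipz_strat V Tmax h = Guess (Some (the_elem V, Tmax))"
              unfolding ipz_strat_def by (simp only: if_False if_True nc False True refl)
            then show ?thesis using x by simp
          qed
          have "IPZ V E lam delta x Tmax" for lam
          proof -
            have "itimes V E lam delta {(x, Tmax)} Tmax x \<noteq> None"
              using seed_infected[of x V Tmax "{(x, Tmax)}"] x by simp
            then have "\<exists>s. infected_at V E lam delta {(x, Tmax)} x s"
              unfolding infected_at_def by blast
            then show ?thesis unfolding IPZ_def using x by simp
          qed
          then show ?thesis unfolding st by simp
        next
          case c1: False
          have st: "ipz_strat V Tmax h = Guess None"
            unfolding ipz_strat_def by (simp only: if_False nc False c1)
          show ?thesis unfolding st
          proof (simp, intro allI impI notI)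
            fix lam v t assume c: "consistent V E Tmax delta lam h" and ip: "IPZ V E lam delta v t"
            show False
            proof (cases "t < Tmax")
              case True
              have "(v, t) \<in> set ?q" using qset True ip by (simp add: IPZ_def)
              then obtain i where i: "i < length ?q" "?q ! i = (v, t)" by (metis in_set_conv_nth)
              have "i < length h" using i hq by simp
              then have "is_log V E lam delta {?q ! i} (snd (h ! i))" by (rule logs[OF c])
              then have "is_log V E lam delta {(v, t)} (snd (h ! i))" using i by simp
              then have "covers V (?q ! i) (snd (h ! i))" using ipz_iff_covers[of V E lam delta v t "snd (h ! i)"] ip i by simp
              then show False using nc i by blast
            next
              case False
              have vl: "valid_labeling E Tmax lam" using c unfolding consistent_def by simp
              have "V = {v}" using late_ipz[OF assms(1) vl _ ip] False by simp
              then show False using c1 by simp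
            qed
          qed
        qed
      qed
    qed
  qed
qed

end
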